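(* Let $\mathbf{a},\mathbf{b}\in\mathbb{R}^n$ have strictly positive entries with $\|\mathbf{a}\|_1=\|\mathbf{b}\|_1=d$. Then the undirected bipartite product graph $G(\mathbf{a},\mathbf{b})$ is a $1/2$-expander, i.e. for every $\emptyset\subset S\subset V$, $$\frac{\delta(S)}{\min\{\operatorname{vol}(S),\operatorname{vol}(V\setminus S)\}}\ge\frac12.$$
   Context: $G(\mathbf{a},\mathbf{b})$ is the undirected weighted graph on vertex set $V=A\cup B$ with $A=\{1,\dots,n\}$, $B=\{n+1,\dots,2n\}$, in which vertex $i\in A$ and vertex $n+j\in B$ are joined by an edge of weight $\mathbf{a}(i)\mathbf{b}(j)/d$, and there are no other edges (so vertex $i\in A$ has degree $\mathbf{a}(i)$ and $n+j\in B$ has degree $\mathbf{b}(j)$). For a weighted undirected graph, $\delta(S)$ is the total weight of edges with exactly one endpoint in $S$ and $\operatorname{vol}(S)$ is the sum of weighted degrees of vertices in $S$. *)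

theory Defs
  imports "HOL-Analysis.Analysis"
begin

text \<open>Weighted undirected graphs on a finite vertex set V, given by a symmetric
  weight function w (w u v = weight of edge {u,v}, 0 if no edge).\<close>

definition wdeg :: "('v \<Rightarrow> 'v \<Rightarrow> real) \<Rightarrow> 'v set \<Rightarrow> 'v \<Rightarrow> real" where
  "wdeg w V v = (\<Sum>u\<in>V. w v u)"

definition vol :: "('v \<Rightarrow> 'v \<Rightarrow> real) \<Rightarrow> 'v set \<Rightarrow> 'v set \<Rightarrow> real" where
  "vol w V S = (\<Sum>v\<in>S. wdeg w V v)"

definition delta :: "('v \<Rightarrow> 'v \<Rightarrow> real) \<Rightarrow> 'v set \<Rightarrow> 'v set \<Rightarrow> real" where
  "delta w V S = (\<Sum>u\<in>S. \<Sum>v\<in>V - S. w u v)"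

text \<open>Bipartite product graph G(a,b): vertices A = {1..n}, B = {n+1..2n};
  i \<in> A and n+j \<in> B joined with weight a(i) b(j) / d; no other edges.
  Vectors a, b are indexed by {1..n}.\<close>

definition prod_vertices :: "nat \<Rightarrow> nat set" where
  "prod_vertices n = {1..2*n}"

definition prod_weight :: "nat \<Rightarrow> (nat \<Rightarrow> real) \<Rightarrow> (nat \<Rightarrow> real) \<Rightarrow> real \<Rightarrow> nat \<Rightarrow> nat \<Rightarrow> real" where
  "prod_weight n a b d u v =
     (if u \<in> {1..n} \<and> v \<in> {n+1..2*n} then a u * b (v - n) / d
      else if v \<in> {1..n} \<and> u \<in> {n+1..2*n} then a v * b (u - n) / d
      else 0)"

end

theory Submission
  imports Defs
begin

lemma final_ineq:
  fixes p q d :: real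
  assumes "d > 0" "0 \<le> p" "p \<le> d" "0 \<le> q" "q \<le> d"
    and m: "min (p+q) (2*d-p-q) > 0"
  shows "(p*(d-q) + q*(d-p))/d / min (p+q) (2*d-p-q) \<ge> 1/2"
proof -
  have key: "2*(p*(d-q) + q*(d-p)) \<ge> d * min (p+q) (2*d-p-q)"
  proof (cases "p+q \<le> d")
    case True
    have "(p+q)^2 - 4*p*q = (p-q)^2" by (simp add: power2_eq_square algebra_simps)
    then have "4*p*q \<le> (p+q)^2" by (metis diff_ge_0_iff_ge zero_le_power2)
    also have "(p+q)^2 \<le> d*(p+q)" using True assms by (simp add: power2_eq_square mult_right_mono)
    finally have "4*p*q \<le> d*(p+q)" .
    then show ?thesis using True by (simp add: algebra_simps)
  next
    case False
    define p' where "p' = d - p"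
    define q' where "q' = d - q"
    have "p'+q' \<le> d" using False p'_def q'_def by simp
    have "(p'+q')^2 - 4*p'*q' = (p'-q')^2" by (simp add: power2_eq_square algebra_simps)
    then have "4*p'*q' \<le> (p'+q')^2" by (metis diff_ge_0_iff_ge zero_le_power2)
    also have "(p'+q')^2 \<le> d*(p'+q')" using \<open>p'+q' \<le> d\<close> assms p'_def q'_def by (simp add: power2_eq_square mult_right_mono)
    finally have "4*p'*q' \<le> d*(p'+q')" .
    then show ?thesis using False unfolding p'_def q'_def by (simp add: algebra_simps)
  qed
  have "(p*(d-q) + q*(d-p))/d / min (p+q) (2*d-p-q) = (p*(d-q) + q*(d-p)) / (d * min (p+q) (2*d-p-q))"
    by simp
  also have "... \<ge> 1/2" using key m assms(1) by (simp add: field_simps)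
  finally show ?thesis .
qed


lemma double_sum_w:
  fixes f ia ib :: "nat \<Rightarrow> real" and d :: real and X Y :: "nat set"
  shows "(\<Sum>u\<in>X. \<Sum>v\<in>Y. f u * f v / d * (ia u * ib v + ia v * ib u))
     = ((\<Sum>u\<in>X. ia u * f u) * (\<Sum>v\<in>Y. ib v * f v) + (\<Sum>u\<in>X. ib u * f u) * (\<Sum>v\<in>Y. ia v * f v)) / d" (is "_ = ?rhs")
proof -
  have "(\<Sum>u\<in>X. \<Sum>v\<in>Y. f u * f v / d * (ia u * ib v + ia v * ib u))
     = (\<Sum>u\<in>X. \<Sum>v\<in>Y. ((ia u * f u) * (ib v * f v) + (ib u * f u) * (ia v * f v)) / d)"
    by (intro sum.cong refl) (simp add: algebra_simps add_divide_distrib)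
  also have "\<dots> = ((\<Sum>u\<in>X. \<Sum>v\<in>Y. (ia u * f u) * (ib v * f v)) + (\<Sum>u\<in>X. \<Sum>v\<in>Y. (ib u * f u) * (ia v * f v))) / d"
    by (simp add: sum_divide_distrib[symmetric] sum.distrib add_divide_distrib)
  also have "\<dots> = ?rhs" by (simp add: sum_product)
  finally show ?thesis .
qed

theorem lemma5p6:
  fixes n :: nat and a b :: "nat \<Rightarrow> real" and d :: real
  assumes a_pos: "\<forall>i\<in>{1..n}. a i > 0"
    and b_pos: "\<forall>i\<in>{1..n}. b i > 0"
    and a_norm: "(\<Sum>i=1..n. \<bar>a i\<bar>) = d"
    and b_norm: "(\<Sum>i=1..n. \<bar>b i\<bar>) = d"
    and S_ne: "S \<noteq> {}"
    and S_sub: "S \<subset> prod_vertices n"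
  shows "delta (prod_weight n a b d) (prod_vertices n) S
           / min (vol (prod_weight n a b d) (prod_vertices n) S)
                 (vol (prod_weight n a b d) (prod_vertices n) (prod_vertices n - S))
         \<ge> 1/2"
proof -
  define V where "V = prod_vertices n"
  define w where "w = prod_weight n a b d"
  define f where "f u = (if u \<le> n then a u else b (u - n))" for u
  define ia where "ia u = (if u \<in> {1..n} then 1 else (0::real))" for u
  define ib where "ib u = (if u \<in> {n+1..2*n} then 1 else (0::real))" for u
  define P where "P X = (\<Sum>u\<in>X. ia u * f u)" for X
  define Q where "Q X = (\<Sum>u\<in>X. ib u * f u)" for X
  have V: "V = {1..2*n}" by (simp add: V_def prod_vertices_def)
  have finV: "finite V" by (simp add: V)
  obtain s where s: "s \<in> S" using S_ne by auto
  have "s \<in> V" using s S_sub V_def by auto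
  hence n1: "n \<ge> 1" using V by auto
  have a_abs: "(\<Sum>i=1..n. a i) = d" using a_norm a_pos by (simp add: less_imp_le)
  have b_abs: "(\<Sum>i=1..n. b i) = d" using b_norm b_pos by (simp add: less_imp_le)
  have dpos: "d > 0" unfolding a_abs[symmetric] using n1 a_pos
    by (intro sum_pos) auto
  have wf: "w u v = f u * f v / d * (ia u * ib v + ia v * ib u)" for u v
    unfolding w_def prod_weight_def f_def ia_def ib_def by auto
  have fpos: "f u > 0" if "u \<in> V" for u
  proof (cases "u \<le> n")
    case True then show ?thesis using that a_pos unfolding V f_def by auto
  next
    case False
    then have "u - n \<in> {1..n}" using that unfolding V by auto
    then show ?thesis using False b_pos unfolding f_def by auto
  qed
  have iab: "ia u + ib u = 1" if "u \<in> V" for u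
    using that unfolding V ia_def ib_def by auto
  have ds: "(\<Sum>u\<in>X. \<Sum>v\<in>Y. w u v) = (P X * Q Y + Q X * P Y) / d" for X Y
    unfolding wf P_def Q_def by (rule double_sum_w)
  have splitV: "V = {1..n} \<union> {n+1..2*n}" unfolding V by auto
  have PV: "P V = d"
  proof -
    have "P V = (\<Sum>u\<in>{1..n}. ia u * f u) + (\<Sum>u\<in>{n+1..2*n}. ia u * f u)"
      unfolding P_def splitV by (rule sum.union_disjoint) auto
    also have "(\<Sum>u\<in>{n+1..2*n}. ia u * f u) = 0" by (simp add: ia_def)
    also have "(\<Sum>u\<in>{1..n}. ia u * f u) = (\<Sum>u\<in>{1..n}. a u)"
      by (rule sum.cong) (auto simp: ia_def f_def)
    finally show ?thesis using a_abs by simp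
  qed
  have QV: "Q V = d"
  proof -
    have "Q V = (\<Sum>u\<in>{1..n}. ib u * f u) + (\<Sum>u\<in>{n+1..2*n}. ib u * f u)"
      unfolding Q_def splitV by (rule sum.union_disjoint) auto
    also have "(\<Sum>u\<in>{1..n}. ib u * f u) = 0" by (simp add: ib_def)
    also have "(\<Sum>u\<in>{n+1..2*n}. ib u * f u) = (\<Sum>u\<in>{n+1..n+n}. b (u - n))"
      by (rule sum.cong) (auto simp: ib_def f_def)
    also have "\<dots> = (\<Sum>i\<in>{1..n}. b i)"
      using sum.shift_bounds_cl_nat_ivl[of "\<lambda>u. b (u - n)" 1 n n] by (simp add: add.commute)
    finally show ?thesis using b_abs by simp
  qed
  have volX: "vol w V X = P X + Q X" for X
  proof -
    have "vol w V X = (P X * Q V + Q X * P V)/d" unfolding vol_def wdeg_def by (rule ds)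
    then have "d * vol w V X = d * (P X + Q X)" using dpos unfolding PV QV by (simp add: field_simps)
    then show ?thesis using dpos by simp
  qed
  have SV: "S \<subseteq> V" using S_sub V_def by auto
  have PC: "P (V - S) = d - P S" using PV sum_diff[OF finV SV, of "\<lambda>u. ia u * f u"]
    unfolding P_def by simp
  have QC: "Q (V - S) = d - Q S" using QV sum_diff[OF finV SV, of "\<lambda>u. ib u * f u"]
    unfolding Q_def by simp
  have Pnn: "P X \<ge> 0" if "X \<subseteq> V" for X
    unfolding P_def using that fpos by (intro sum_nonneg) (auto simp: ia_def less_imp_le)
  have Qnn: "Q X \<ge> 0" if "X \<subseteq> V" for X
    unfolding Q_def using that fpos by (intro sum_nonneg) (auto simp: ib_def less_imp_le)
  have PQ: "P X + Q X = (\<Sum>u\<in>X. f u)" if "X \<subseteq> V" for X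
    unfolding P_def Q_def sum.distrib[symmetric]
    proof (rule sum.cong)
    fix x assume "x \<in> X"
    then have "ia x + ib x = 1" using that iab by auto
    then show "ia x * f x + ib x * f x = f x" by (metis distrib_right mult_1)
  qed simp
  have pos: "P X + Q X > 0" if "X \<subseteq> V" "X \<noteq> {}" for X
  proof -
    have "finite X" using that finV finite_subset by auto
    then show ?thesis unfolding PQ[OF that(1)] using that fpos
      by (intro sum_pos) auto
  qed
  have S1: "P S + Q S > 0" using pos SV S_ne by auto
  have S2: "P (V - S) + Q (V - S) > 0" using pos S_sub V_def by auto
  have delta_eq: "delta w V S = (P S * (d - Q S) + Q S * (d - P S)) / d"
    unfolding delta_def ds PC QC by simp
  have m: "min (P S + Q S) (2*d - P S - Q S) > 0" using S1 S2 PC QC by simp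
  have "(P S * (d - Q S) + Q S * (d - P S)) / d / min (P S + Q S) (2*d - P S - Q S) \<ge> 1/2"
    using final_ineq[OF dpos Pnn[OF SV] _ Qnn[OF SV] _ m]
      Pnn[of "V - S"] Qnn[of "V - S"] PC QC by auto
  moreover have "vol w V (V - S) = 2*d - P S - Q S" using volX PC QC by simp
  ultimately show ?thesis
    using delta_eq volX[of S] unfolding V_def w_def by simp
qed

end
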